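(* Let $N\ge 2$ and $d\ge 1$ be integers, $[N]=\{1,\dots,N\}$, and let $0\le\sigma\le\tau$. Let $\psi:[0,\infty)\to[0,\infty)$ be continuous, nonincreasing, with $\psi(s)>0$ for all $s\ge0$ and $\sup_{s\ge0}\psi(s)\le1$. Let $x_i^0\in C^1([-\tau,0],\mathbb{R}^d)$, $v_i^0\in C([-\tau,0],\mathbb{R}^d)$ with $\frac{\mathrm d}{\mathrm dt}x_i^0=v_i^0$ on $[-\tau,0]$, $i\in[N]$, and let $\{x_i,v_i\}_{i\in[N]}$ be the global solution of \[ \dot x_i(t)=v_i(t),\qquad \dot v_i(t)=\sum_{j\ne i}a_{ij}(t)\big(v_j(t-\tau)-v_i(t-\sigma)\big),\quad t>0, \] with $a_{ij}(t)=\frac{1}{N-1}\psi(|x_i(t-\sigma)-x_j(t-\tau)|)$ and $x_i=x_i^0$, $v_i=v_i^0$ on $[-\tau,0]$. Let $K$ be the smallest integer with $K\sigma\ge2\tau$. Assume there exists $\beta>0$ with \[ 4\tau\le\beta\left(2e^{-2\tau}-1\right) \] and $C>0$ with \[ e^{C\tau}\big(4\tau e^{C\tau}+\beta(1-e^{-2\tau})\big)+C\le\psi\Big(\Delta^0_x+\mathcal{W}^K_\sigma\Delta^0_v+\frac{e^{C\tau}}{C}\big(1+\beta^{-1}e^{2\tau+C\sigma}+e^{C\tau}(\tau-\sigma)\big)\mathcal{Z}^K_\sigma\Delta^0_v\Big), \] where $\mathcal{Z}^K_\sigma:=Z^K_\sigma+Z^{K-1}_\sigma\beta\big(1-(1+2\tau)e^{-2\tau}\big)$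 and $\mathcal{W}^K_\sigma:=Z^K_\sigma-(1+\sigma)(Z^{K-1}_\sigma+1)$. Then the solution exhibits asymptotic flocking, i.e. $\sup_{t\ge0}d_x(t)<\infty$ and $\lim_{t\to\infty}d_v(t)=0$, and $d_v(t)$ decays exponentially in time with rate $C$.
   Context: $d_x(t):=\max_{i,j}|x_i(t)-x_j(t)|$, $d_v(t):=\max_{i,j}|v_i(t)-v_j(t)|$ for $t\ge0$. $\Delta^0_x:=\max_{i,j}\max_{s,t\in[-\tau,0]}|x_i^0(s)-x_j^0(t)|$, $\Delta^0_v:=\max_{i,j}\max_{s,t\in[-\tau,0]}|v_i^0(s)-v_j^0(t)|$. For $k\ge0$, \[ Z^k_\sigma:=\frac{1}{2\sqrt{\sigma(1+\sigma)}}\Big[\big((1+\sigma)+\sqrt{\sigma(1+\sigma)}\big)^{k+1}-\big((1+\sigma)-\sqrt{\sigma(1+\sigma)}\big)^{k+1}\Big], \] a polynomial in $\sigma$; equivalently $Z^0_\sigma=1$, $Z^k_\sigma=1+(1+\sigma)Z^{k-1}_\sigma+\sigma\sum_{m=0}^{k-1}Z^m_\sigma$ for $k\ge1$. "Decays exponentially with rate $C$" means there is a constant $A>0$ with $d_v(t)\le Ae^{-Ct}$ for all $t\ge0$. *)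

theory Defs
  imports "HOL-Analysis.Analysis"
begin

text \<open>Z^k_sigma via the closed formula (sigma > 0 in the theorem, so no division by zero).\<close>
definition Zs :: "real \<Rightarrow> nat \<Rightarrow> real" where
  "Zs \<sigma> k = (1 / (2 * sqrt (\<sigma> * (1 + \<sigma>)))) *
      (((1 + \<sigma>) + sqrt (\<sigma> * (1 + \<sigma>))) ^ (k + 1)
     - ((1 + \<sigma>) - sqrt (\<sigma> * (1 + \<sigma>))) ^ (k + 1))"

text \<open>Diameters. Agents are indexed by 0..N-1.\<close>
definition dX :: "nat \<Rightarrow> (nat \<Rightarrow> real \<Rightarrow> real ^ 'd) \<Rightarrow> real \<Rightarrow> real" where
  "dX N x t = Max {norm (x i t - x j t) | i j. i < N \<and> j < N}"

definition Delta0 :: "nat \<Rightarrow> real \<Rightarrow> (nat \<Rightarrow> real \<Rightarrow> real ^ 'd) \<Rightarrow> real" where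
  "Delta0 N \<tau> x0 = (SUP p \<in> {(i, j, s, t). i < N \<and> j < N \<and> s \<in> {-\<tau>..0} \<and> t \<in> {-\<tau>..0}}.
        (case p of (i, j, s, t) \<Rightarrow> norm (x0 i s - x0 j t)))"

end

theory Submission imports Defs begin

lemma Zs_rec:
  assumes "\<sigma> > 0"
  shows "Zs \<sigma> (k+2) = 2*(1+\<sigma>)*Zs \<sigma> (k+1) - (1+\<sigma>)*Zs \<sigma> k"
proof -
  define s where "s = sqrt (\<sigma>*(1+\<sigma>))"
  have s2: "s^2 = \<sigma>*(1+\<sigma>)" unfolding s_def using assms by simp
  have s0: "s > 0" unfolding s_def using assms by simp
  have r: "r^2 = 2*(1+\<sigma>)*r - (1+\<sigma>)" if "r = 1+\<sigma>+s \<or> r = 1+\<sigma>-s" for r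
  proof -
    have "r - (1+\<sigma>) = s \<or> r - (1+\<sigma>) = -s" using that by auto
    then have "(r - (1+\<sigma>))^2 = s^2" by auto
    then have "r^2 = s^2 + 2*(1+\<sigma>)*r - (1+\<sigma>)^2" by (simp add: power2_eq_square algebra_simps)
    then show ?thesis using s2 by (simp add: power2_eq_square algebra_simps)
  qed
  have e: "r^(k+2+1) = 2*(1+\<sigma>)*r^(k+1+1) - (1+\<sigma>)*r^(k+1)" if "r = 1+\<sigma>+s \<or> r = 1+\<sigma>-s" for r
  proof -
    have "r^(k+2+1) = r^(k+1) * r^2" by (simp add: numeral_eq_Suc)
    also have "\<dots> = r^(k+1) * (2*(1+\<sigma>)*r - (1+\<sigma>))" using r[OF that] by simp
    also have "\<dots> = 2*(1+\<sigma>)*r^(k+1+1) - (1+\<sigma>)*r^(k+1)"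
      by (simp add: algebra_simps)
    finally show ?thesis .
  qed
  have Z: "Zs \<sigma> n = ((1+\<sigma>+s)^(n+1) - (1+\<sigma>-s)^(n+1)) / (2 * s)" for n
    unfolding Zs_def s_def by simp
  have lin: "(c1 - c2)/d = 2*p*((b1 - b2)/d) - p*((a1 - a2)/d)"
    if "c1 = 2*p*b1 - p*a1" "c2 = 2*p*b2 - p*a2" for a1 a2 b1 b2 c1 c2 p d :: real
    unfolding that by (cases "d=0") (simp_all add: field_simps)
  have H0: "Zs \<sigma> (k+2) = ((1+\<sigma>+s)^(k+2+1) - (1+\<sigma>-s)^(k+2+1)) / (2 * s)"
    by (rule Z)
  have E1: "(1+\<sigma>+s)^(k+2+1) = 2*(1+\<sigma>)*(1+\<sigma>+s)^(k+1+1) - (1+\<sigma>)*(1+\<sigma>+s)^(k+1)"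
    by (rule e) (rule disjI1, rule refl)
  have E2: "(1+\<sigma>-s)^(k+2+1) = 2*(1+\<sigma>)*(1+\<sigma>-s)^(k+1+1) - (1+\<sigma>)*(1+\<sigma>-s)^(k+1)"
    by (rule e) (rule disjI2, rule refl)
  have "((1+\<sigma>+s)^(k+2+1) - (1+\<sigma>-s)^(k+2+1)) / (2 * s) = 2*(1+\<sigma>)*(((1+\<sigma>+s)^(k+1+1) - (1+\<sigma>-s)^(k+1+1)) / (2 * s))
     - (1+\<sigma>)*(((1+\<sigma>+s)^(k+1) - (1+\<sigma>-s)^(k+1)) / (2 * s))"
    by (rule lin[OF E1 E2])
  with H0 have "Zs \<sigma> (k+2) = 2*(1+\<sigma>)*(((1+\<sigma>+s)^(k+1+1) - (1+\<sigma>-s)^(k+1+1)) / (2 * s))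
     - (1+\<sigma>)*(((1+\<sigma>+s)^(k+1) - (1+\<sigma>-s)^(k+1)) / (2 * s))" by (rule trans)
  also have "\<dots> = 2*(1+\<sigma>)*Zs \<sigma> (k+1) - (1+\<sigma>)*Zs \<sigma> k"
    unfolding Z[of "k+1"] Z[of k] by (rule refl)
  finally show ?thesis .
qed

lemma Zs_01: assumes "\<sigma> > 0" shows "Zs \<sigma> 0 = 1" "Zs \<sigma> 1 = 2*(1+\<sigma>)"
proof -
  define s where "s = sqrt (\<sigma>*(1+\<sigma>))"
  have s0: "s > 0" unfolding s_def using assms by simp
  show "Zs \<sigma> 0 = 1" unfolding Zs_def s_def[symmetric] using s0 by simp
  show "Zs \<sigma> 1 = 2*(1+\<sigma>)" unfolding Zs_def s_def[symmetric] using s0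
    by (simp add: power2_eq_square field_simps)
qed

lemma Zs_mono:
  assumes "\<sigma> > 0"
  shows "Zs \<sigma> (k+1) - Zs \<sigma> k \<ge> 1 \<and> Zs \<sigma> k \<ge> real k + 1"
proof (induction k)
  case 0 then show ?case using Zs_01[OF assms] assms by simp
next
  case (Suc k)
  have "Zs \<sigma> (k+2) - Zs \<sigma> (k+1) = (1+\<sigma>)*(Zs \<sigma> (k+1) - Zs \<sigma> k) + \<sigma> * Zs \<sigma> (k+1)"
    using Zs_rec[OF assms, of k] by (simp add: algebra_simps)
  moreover have "(1+\<sigma>)*(Zs \<sigma> (k+1) - Zs \<sigma> k) \<ge> 1 * 1"
    by (rule mult_mono) (use Suc assms in auto)
  moreover have "\<sigma> * Zs \<sigma> (k+1) \<ge> 0" using Suc assms by simp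
  ultimately show ?case using Suc by (simp add: add.commute)
qed

lemma first_crossing:
  fixes f :: "'k \<Rightarrow> real \<Rightarrow> real"
  assumes fin: "finite I" and cont: "\<And>k. k \<in> I \<Longrightarrow> continuous_on {0..} (f k)"
  and step: "\<And>t. 0 \<le> t \<Longrightarrow> (\<forall>s k. 0 \<le> s \<longrightarrow> s < t \<longrightarrow> k \<in> I \<longrightarrow> f k s < 0) \<Longrightarrow>
        (0 < t \<longrightarrow> (\<forall>k\<in>I. f k t \<le> 0)) \<Longrightarrow> (\<forall>k\<in>I. f k t < 0)"
  shows "\<forall>t\<ge>0. \<forall>k\<in>I. f k t < 0"
proof (rule ccontr)
  assume neg: "\<not> ?thesis"
  define S where "S = {t. 0 \<le> t \<and> (\<exists>k\<in>I. f k t \<ge> 0)}"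
  have ne: "S \<noteq> {}" using neg by (auto simp: S_def not_less)
  have bdd: "bdd_below S" unfolding S_def by (rule bdd_belowI[of _ 0]) auto
  define t0 where "t0 = Inf S"
  have t0ge: "0 \<le> t0" unfolding t0_def using ne by (intro cInf_greatest) (auto simp: S_def)
  have below: "\<forall>s k. 0 \<le> s \<longrightarrow> s < t0 \<longrightarrow> k \<in> I \<longrightarrow> f k s < 0"
  proof (intro allI impI)
    fix s k assume that: "0 \<le> s" "s < t0" "k \<in> I"
    show "f k s < 0"
    proof (rule ccontr)
      assume "\<not> f k s < 0" then have "s \<in> S" using that by (auto simp: S_def not_less)
      then have "t0 \<le> s" unfolding t0_def using bdd by (rule cInf_lower)
      with that show False by simp
    qed
  qed
  have le: "0 < t0 \<longrightarrow> (\<forall>k\<in>I. f k t0 \<le> 0)"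
  proof (intro impI ballI)
    fix k assume t0: "0 < t0" and k: "k \<in> I"
    have "((f k) \<longlongrightarrow> f k t0) (at t0 within {0..})"
      using cont[OF k] t0ge by (auto simp: continuous_on_def)
    then have "((f k) \<longlongrightarrow> f k t0) (at t0 within {0..t0})"
      by (rule tendsto_within_subset) auto
    then have lim: "((f k) \<longlongrightarrow> f k t0) (at_left t0)"
      using at_within_Icc_at_left[OF t0] by simp
    have "eventually (\<lambda>s. f k s \<le> 0) (at_left t0)"
      unfolding eventually_at_left_field using t0 below k
      by (intro exI[of _ 0]) (auto intro: less_imp_le)
    then show "f k t0 \<le> 0"
      using tendsto_upperbound[OF lim] trivial_limit_at_left_real by blast
  qed
  have all: "\<forall>k\<in>I. f k t0 < 0" by (rule step[OF t0ge below le])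
  have ev: "eventually (\<lambda>s. \<forall>k\<in>I. f k s < 0) (at_right t0)"
  proof (rule eventually_ball_finite[OF fin], rule ballI)
    fix k assume k: "k \<in> I"
    have "((f k) \<longlongrightarrow> f k t0) (at t0 within {0..})"
      using cont[OF k] t0ge by (auto simp: continuous_on_def)
    then have "((f k) \<longlongrightarrow> f k t0) (at t0 within {t0<..})"
      by (rule tendsto_within_subset) (use t0ge in auto)
    then show "eventually (\<lambda>s. f k s < 0) (at_right t0)"
      using all k by (auto intro: order_tendstoD(2))
  qed
  then obtain b where b: "b > t0" "\<And>y. t0 < y \<Longrightarrow> y < b \<Longrightarrow> \<forall>k\<in>I. f k y < 0"
    by (auto simp: eventually_at_right_field)
  have "b \<le> t0" unfolding t0_def
  proof (rule cInf_greatest[OF ne])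
    fix t assume t: "t \<in> S"
    then obtain k where k: "k \<in> I" "f k t \<ge> 0" "0 \<le> t" by (auto simp: S_def)
    have "t0 \<le> t" unfolding t0_def using t bdd by (rule cInf_lower)
    show "b \<le> t"
    proof (rule ccontr)
      assume "\<not> b \<le> t"
      then have "t < b" by simp
      show False
      proof (cases "t = t0")
        case True then show False using all k by auto
      next
        case False then show False using b(2)[of t] \<open>t0 \<le> t\<close> \<open>t < b\<close> k by auto
      qed
    qed
  qed
  with b show False by simp
qed

lemma mvt_const:
  fixes f :: "real \<Rightarrow> 'a::real_normed_vector"
  assumes "a \<le> b" "continuous_on {a..b} f"
    "\<And>s. a < s \<Longrightarrow> s < b \<Longrightarrow> (f has_vector_derivative f' s) (at s)"
    "\<And>s. a < s \<Longrightarrow> s < b \<Longrightarrow> norm (f' s) \<le> M"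
  shows "norm (f b - f a) \<le> M * (b - a)"
proof (cases "a = b")
  case True then show ?thesis by simp
next
  case False then have ab: "a < b" using assms(1) by simp
  have d: "((\<lambda>s. M * s) has_vector_derivative M) (at s)" for s
    unfolding has_real_derivative_iff_has_vector_derivative[symmetric]
    by (auto intro!: derivative_eq_intros)
  have "norm (f b - f a) \<le> M * b - M * a"
    by (rule differentiable_bound_general[OF ab assms(2), where \<phi>="\<lambda>s. M * s" and \<phi>'="\<lambda>_. M"])
       (auto intro!: continuous_intros d assms(3,4))
  then show ?thesis by (simp add: algebra_simps)
qed

lemma mvt_exp:
  fixes f :: "real \<Rightarrow> 'a::real_normed_vector"
  assumes "a \<le> b" "C > 0" "H \<ge> 0" "continuous_on {a..b} f"
    "\<And>s. a < s \<Longrightarrow> s < b \<Longrightarrow> (f has_vector_derivative f' s) (at s)"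
    "\<And>s. a < s \<Longrightarrow> s < b \<Longrightarrow> norm (f' s) \<le> H * exp (- C * s)"
  shows "norm (f b - f a) \<le> H / C * exp (- C * a)"
proof (cases "a = b")
  case True then show ?thesis using assms by simp
next
  case False then have ab: "a < b" using assms(1) by simp
  have d: "((\<lambda>s. - (H / C) * exp (- C * s)) has_vector_derivative H * exp (- C * s)) (at s)" for s
    unfolding has_real_derivative_iff_has_vector_derivative[symmetric]
    using assms(2) by (auto intro!: derivative_eq_intros)
  have "norm (f b - f a) \<le> - (H / C) * exp (- C * b) - - (H / C) * exp (- C * a)"
    apply (rule differentiable_bound_general[OF ab assms(4), where \<phi>="\<lambda>s. - (H / C) * exp (- C * s)"
          and \<phi>'="\<lambda>s. H * exp (- C * s)"])
     apply (intro continuous_intros)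
      apply (rule assms(5); assumption)
     apply (rule d)
    apply (rule assms(6); assumption)
    done
  also have "\<dots> \<le> H / C * exp (- C * a)"
    using assms(2,3) by (simp add: divide_nonneg_pos)
  finally show ?thesis .
qed

lemma tri3: fixes p q r :: "'a::real_normed_vector"
  shows "norm (p + q - r) \<le> norm p + norm q + norm r"
proof -
  have "norm (p + q - r) \<le> norm (p + q) + norm r" by (rule norm_triangle_ineq4)
  moreover have "norm (p + q) \<le> norm p + norm q" by (rule norm_triangle_ineq)
  ultimately show ?thesis by linarith
qed

lemma tri2: fixes p q :: "'a::real_normed_vector"
  shows "norm (p - r) \<le> norm (p - q) + norm (q - r)"
  using norm_triangle_ineq[of "p - q" "q - r"] by simp

lemma side:
  fixes w ui qi :: "'a::real_inner" and u p :: "nat \<Rightarrow> 'a"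
  assumes fin: "finite A" and al: "\<And>j. j \<in> A \<Longrightarrow> \<alpha> j \<ge> ast" and ast: "ast \<ge> 0"
    and sa: "(\<Sum>j\<in>A. \<alpha> j) \<le> 1"
    and neg: "\<And>j. j \<in> A \<Longrightarrow> w \<bullet> (u j - ui) \<le> 0"
    and dp: "\<And>j. j \<in> A \<Longrightarrow> norm (p j - u j) \<le> \<rho>1"
    and dq: "norm (ui - qi) \<le> \<rho>2" and r1: "\<rho>1 \<ge> 0"
  shows "w \<bullet> (\<Sum>j\<in>A. \<alpha> j *\<^sub>R (p j - qi))
     \<le> ast * (\<Sum>j\<in>A. w \<bullet> (u j - ui)) + norm w * (\<rho>1 + \<rho>2)"
proof -
  have r2: "\<rho>2 \<ge> 0" using dq norm_ge_zero order_trans by blast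
  have each: "\<alpha> j * (w \<bullet> (p j - qi)) \<le> ast * (w \<bullet> (u j - ui)) + \<alpha> j * (norm w * (\<rho>1 + \<rho>2))"
    if j: "j \<in> A" for j
  proof -
    have a0: "\<alpha> j \<ge> 0" using al[OF j] ast by simp
    have e: "w \<bullet> (p j - qi) = w \<bullet> (u j - ui) + w \<bullet> (p j - u j) + w \<bullet> (ui - qi)"
      by (simp add: inner_diff_right)
    have c1: "w \<bullet> (p j - u j) \<le> norm w * \<rho>1"
      using norm_cauchy_schwarz[of w "p j - u j"] dp[OF j]
      by (meson mult_left_mono norm_ge_zero order_trans)
    have c2: "w \<bullet> (ui - qi) \<le> norm w * \<rho>2"
      using norm_cauchy_schwarz[of w "ui - qi"] dq
      by (meson mult_left_mono norm_ge_zero order_trans)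
    have "w \<bullet> (p j - qi) \<le> w \<bullet> (u j - ui) + norm w * (\<rho>1 + \<rho>2)"
      using e c1 c2 by (simp add: distrib_left)
    then have "\<alpha> j * (w \<bullet> (p j - qi)) \<le> \<alpha> j * (w \<bullet> (u j - ui)) + \<alpha> j * (norm w * (\<rho>1 + \<rho>2))"
      using a0 by (metis distrib_left mult_left_mono)
    moreover have "\<alpha> j * (w \<bullet> (u j - ui)) \<le> ast * (w \<bullet> (u j - ui))"
      using mult_right_mono_neg[OF al[OF j] neg[OF j]] .
    ultimately show ?thesis by linarith
  qed
  have "w \<bullet> (\<Sum>j\<in>A. \<alpha> j *\<^sub>R (p j - qi)) = (\<Sum>j\<in>A. \<alpha> j * (w \<bullet> (p j - qi)))"
    by (simp add: inner_sum_right)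
  also have "\<dots> \<le> (\<Sum>j\<in>A. ast * (w \<bullet> (u j - ui)) + \<alpha> j * (norm w * (\<rho>1 + \<rho>2)))"
    by (rule sum_mono) (rule each)
  also have "\<dots> = ast * (\<Sum>j\<in>A. w \<bullet> (u j - ui)) + (\<Sum>j\<in>A. \<alpha> j) * (norm w * (\<rho>1 + \<rho>2))"
    by (simp add: sum.distrib sum_distrib_left sum_distrib_right)
  also have "\<dots> \<le> ast * (\<Sum>j\<in>A. w \<bullet> (u j - ui)) + norm w * (\<rho>1 + \<rho>2)"
  proof -
    have "0 \<le> norm w * (\<rho>1 + \<rho>2)" using r1 r2 by simp
    then have "(\<Sum>j\<in>A. \<alpha> j) * (norm w * (\<rho>1 + \<rho>2)) \<le> norm w * (\<rho>1 + \<rho>2)"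
      using mult_right_mono[OF sa] by simp
    then show ?thesis by simp
  qed
  finally show ?thesis .
qed

locale flock =
  fixes N :: nat and \<sigma> \<tau> :: real and \<psi> :: "real \<Rightarrow> real"
    and x v :: "nat \<Rightarrow> real \<Rightarrow> real ^ 'd"
    and Dx Dv C B P d G :: real
  assumes N: "N \<ge> 2"
    and sig: "0 < \<sigma>" "\<sigma> \<le> \<tau>"
    and psi_cont: "continuous_on {0..} \<psi>"
    and psi_mono: "\<And>s t. 0 \<le> s \<Longrightarrow> s \<le> t \<Longrightarrow> \<psi> t \<le> \<psi> s"
    and psi_pos: "\<And>s. 0 \<le> s \<Longrightarrow> \<psi> s > 0"
    and psi_le1: "\<And>s. 0 \<le> s \<Longrightarrow> \<psi> s \<le> 1"
    and x_deriv: "\<And>i t. i < N \<Longrightarrow> t \<ge> -\<tau> \<Longrightarrow>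
                     (x i has_vector_derivative v i t) (at t within {-\<tau>..})"
    and v_cont: "\<And>i. i < N \<Longrightarrow> continuous_on {-\<tau>..} (v i)"
    and v_deriv: "\<And>i t. i < N \<Longrightarrow> t > 0 \<Longrightarrow>
                     (v i has_vector_derivative
                        (\<Sum>j\<in>{..<N} - {i}.
                           (\<psi> (norm (x i (t - \<sigma>) - x j (t - \<tau>))) / real (N - 1))
                             *\<^sub>R (v j (t - \<tau>) - v i (t - \<sigma>)))) (at t)"
    and Dx: "\<And>i j s t. i < N \<Longrightarrow> j < N \<Longrightarrow> s \<in> {-\<tau>..0} \<Longrightarrow> t \<in> {-\<tau>..0} \<Longrightarrow>
               norm (x i s - x j t) \<le> Dx"
    and Dv: "\<And>i j s t. i < N \<Longrightarrow> j < N \<Longrightarrow> s \<in> {-\<tau>..0} \<Longrightarrow> t \<in> {-\<tau>..0} \<Longrightarrow>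
               norm (v i s - v j t) \<le> Dv"
    and Cpos: "C > 0"
    and d_def: "d = \<tau> - \<sigma>"
    and dexp: "d * exp (C * \<tau>) < 1"
    and dlt1: "d < 1"
    and G_def: "G = exp (C * \<tau>) / (1 - d * exp (C * \<tau>))"
    and Bpos: "B > 0" and DvB: "Dv < B"
    and transB: "Dv * (1 + 2 * \<tau> / (1 - d)) < B * exp (- C * \<tau>)"
    and posb: "Dx + (1 + d * G) * exp (C * d) * B / C \<le> P"
    and rate: "\<psi> P > C + 2 * (\<tau> + \<sigma>) * G * exp (C * \<tau>)"
begin

definition a where "a i j t = \<psi> (norm (x i (t - \<sigma>) - x j (t - \<tau>))) / real (N - 1)"
definition F where "F i t = (\<Sum>j\<in>{..<N} - {i}. a i j t *\<^sub>R (v j (t - \<tau>) - v i (t - \<sigma>)))"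
definition b where "b t = B * exp (- C * t)"

lemma tau_pos: "\<tau> > 0" using sig by simp
lemma d_nonneg: "0 \<le> d" using sig d_def by simp
lemma d_le: "d \<le> \<tau>" "d < \<tau>" using sig d_def by simp_all

lemma G_pos: "G > 0" using dexp G_def by simp
lemma G_eq: "1 + d * G = G * exp (- C * \<tau>)"
proof -
  have ne: "1 - d * exp (C * \<tau>) \<noteq> 0" using dexp by simp
  have "exp (C * \<tau>) * exp (- C * \<tau>) = 1" by (simp add: exp_minus[symmetric] exp_add[symmetric])
  then show ?thesis unfolding G_def using ne by (simp add: field_simps)
qed
lemma G_ge1: "1 \<le> G * exp (- C * \<tau>)"
proof -
  have "0 \<le> d * G" using d_nonneg G_pos by simp
  then show ?thesis using G_eq by linarith
qed

lemma b_pos: "b t > 0" unfolding b_def using Bpos by simp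
lemma b_mono: "s \<le> t \<Longrightarrow> b t \<le> b s" unfolding b_def using Bpos Cpos by simp
lemma b_shift: "b (t - c) = exp (C * c) * b t" unfolding b_def
  by (simp add: algebra_simps exp_add[symmetric])

lemma N1: "real (N - 1) > 0" "real (N - 1) = real N - 1" using N by auto

lemma a_pos: "a i j t > 0" unfolding a_def using psi_pos N1 by simp
lemma a_le: "a i j t \<le> 1 / real (N - 1)" unfolding a_def using psi_le1 N1
  by (simp add: divide_right_mono)
lemma a_ge: "norm (x i (t - \<sigma>) - x j (t - \<tau>)) \<le> P \<Longrightarrow> a i j t \<ge> \<psi> P / real (N - 1)"
  unfolding a_def using psi_mono N1 by (simp add: divide_right_mono)

lemma card_A: "i < N \<Longrightarrow> card ({..<N} - {i}) = N - 1" by simp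
lemma A_ne: "({..<N} - {i}) \<noteq> {}"
proof -
  have "(if i = 0 then 1 else 0) \<in> {..<N} - {i}" using N by auto
  then show ?thesis by blast
qed

lemma sum_a: "i < N \<Longrightarrow> (\<Sum>j\<in>{..<N} - {i}. a i j t) \<le> 1"
proof -
  assume i: "i < N"
  have "(\<Sum>j\<in>{..<N} - {i}. a i j t) \<le> (\<Sum>j\<in>{..<N} - {i}. 1 / real (N - 1))"
    by (rule sum_mono) (rule a_le)
  also have "\<dots> = 1" using i N1 by (simp add: card_A)
  finally show ?thesis .
qed

lemma v_deriv': "i < N \<Longrightarrow> t > 0 \<Longrightarrow> (v i has_vector_derivative F i t) (at t)"
  unfolding F_def a_def by (rule v_deriv)

lemma F_bound_strict:
  assumes i: "i < N" and h: "\<And>j. j \<in> {..<N} - {i} \<Longrightarrow> norm (v j (t - \<tau>) - v i (t - \<sigma>)) < M"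
  shows "norm (F i t) < M"
proof -
  have M0: "M > 0"
  proof -
    obtain j where "j \<in> {..<N} - {i}" using A_ne by blast
    from h[OF this] show ?thesis by (meson le_less_trans norm_ge_zero)
  qed
  have "norm (F i t) \<le> (\<Sum>j\<in>{..<N} - {i}. norm (a i j t *\<^sub>R (v j (t - \<tau>) - v i (t - \<sigma>))))"
    unfolding F_def by (rule norm_sum)
  also have "\<dots> = (\<Sum>j\<in>{..<N} - {i}. a i j t * norm (v j (t - \<tau>) - v i (t - \<sigma>)))"
    using a_pos by (simp add: less_imp_le)
  also have "\<dots> < (\<Sum>j\<in>{..<N} - {i}. a i j t * M)"
    by (rule sum_strict_mono) (use A_ne a_pos h in auto)
  also have "\<dots> = M * (\<Sum>j\<in>{..<N} - {i}. a i j t)" by (simp add: sum_distrib_left mult.commute)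
  also have "\<dots> \<le> M" using sum_a[OF i] M0 by (simp add: mult_left_le)
  finally show ?thesis .
qed

lemma F_bound:
  assumes i: "i < N" and M0: "M \<ge> 0"
    and h: "\<And>j. j \<in> {..<N} - {i} \<Longrightarrow> norm (v j (t - \<tau>) - v i (t - \<sigma>)) \<le> M"
  shows "norm (F i t) \<le> M"
proof -
  have "norm (F i t) \<le> (\<Sum>j\<in>{..<N} - {i}. norm (a i j t *\<^sub>R (v j (t - \<tau>) - v i (t - \<sigma>))))"
    unfolding F_def by (rule norm_sum)
  also have "\<dots> = (\<Sum>j\<in>{..<N} - {i}. a i j t * norm (v j (t - \<tau>) - v i (t - \<sigma>)))"
    using a_pos by (simp add: less_imp_le)
  also have "\<dots> \<le> (\<Sum>j\<in>{..<N} - {i}. a i j t * M)"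
    by (rule sum_mono) (use a_pos h in \<open>auto intro: mult_left_mono less_imp_le\<close>)
  also have "\<dots> = M * (\<Sum>j\<in>{..<N} - {i}. a i j t)" by (simp add: sum_distrib_left mult.commute)
  also have "\<dots> \<le> M" using sum_a[OF i] M0 by (simp add: mult_left_le)
  finally show ?thesis .
qed

lemma x_cont: "i < N \<Longrightarrow> continuous_on {-\<tau>..} (x i)"
  unfolding continuous_on_eq_continuous_within
proof
  fix t assume "i < N" "t \<in> {-\<tau>..}"
  then show "continuous (at t within {-\<tau>..}) (x i)"
    using has_vector_derivative_continuous[OF x_deriv[of i t]] by simp
qed

lemma x_deriv_at: "i < N \<Longrightarrow> t > -\<tau> \<Longrightarrow> (x i has_vector_derivative v i t) (at t)"
  using x_deriv[of i t] at_within_interior[of t "{-\<tau>..}"] by simp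

lemma shift_cont:
  assumes "continuous_on {-\<tau>..} f" "0 \<le> c" "c \<le> \<tau>"
  shows "continuous_on {0..} (\<lambda>t. f (t - c))"
  by (rule continuous_on_compose2[OF assms(1)]) (use assms in \<open>auto intro!: continuous_intros\<close>)

lemma F_cont: "i < N \<Longrightarrow> continuous_on {0..} (F i)"
proof -
  assume i: "i < N"
  have vs: "continuous_on {0..} (\<lambda>t. v j (t - c))" if "j < N" "0 \<le> c" "c \<le> \<tau>" for j c
    using shift_cont[OF v_cont[OF that(1)] that(2,3)] .
  have xs: "continuous_on {0..} (\<lambda>t. x j (t - c))" if "j < N" "0 \<le> c" "c \<le> \<tau>" for j c
    using shift_cont[OF x_cont[OF that(1)] that(2,3)] .
  have ac: "continuous_on {0..} (\<lambda>t. a i j t)" if "j < N" for j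
  proof -
    have "continuous_on {0..} (\<lambda>t. \<psi> (norm (x i (t - \<sigma>) - x j (t - \<tau>))))"
      by (rule continuous_on_compose2[OF psi_cont])
         (use xs[OF i] xs[OF that] sig in \<open>auto intro!: continuous_intros\<close>)
    then show ?thesis unfolding a_def by (intro continuous_intros) (use N in auto)
  qed
  have "continuous_on {0..} (\<lambda>t. a i j t *\<^sub>R (v j (t - \<tau>) - v i (t - \<sigma>)))" if "j < N" for j
    by (intro continuous_on_scaleR continuous_on_diff ac vs) (use i that sig N in auto)
  then show ?thesis unfolding F_def
    by (intro continuous_on_sum) auto
qed

lemma Dv_nonneg: "0 \<le> Dv"
  using Dv[of 0 0 0 0] N tau_pos by simp
lemma Dx_nonneg: "0 \<le> Dx"
  using Dx[of 0 0 0 0] N tau_pos by simp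

lemma mvt_v:
  assumes j: "j < N" and a0: "0 \<le> a0" "a0 \<le> c"
    and bd: "\<And>s. a0 < s \<Longrightarrow> s < c \<Longrightarrow> norm (F j s) \<le> M"
  shows "norm (v j c - v j a0) \<le> M * (c - a0)"
proof (rule mvt_const[where f' = "F j"])
  show "a0 \<le> c" by fact
  show "continuous_on {a0..c} (v j)"
    by (rule continuous_on_subset[OF v_cont[OF j]]) (use a0 tau_pos in auto)
  show "(v j has_vector_derivative F j s) (at s)" if "a0 < s" "s < c" for s
    using v_deriv'[OF j] that a0 by simp
  show "norm (F j s) \<le> M" if "a0 < s" "s < c" for s using bd that by simp
qed

definition GS where "GS = (\<Union>i\<in>{..<N}. (\<lambda>q. norm (F i q)) ` {0..\<tau>})"
definition G0 where "G0 = Sup GS"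

lemma GS_bdd: "bdd_above GS"
proof -
  have "bounded GS" unfolding GS_def
  proof (rule bounded_UN)
    show "finite {..<N}" by simp
    show "\<forall>i\<in>{..<N}. bounded ((\<lambda>q. norm (F i q)) ` {0..\<tau>})"
    proof
      fix i assume "i \<in> {..<N}"
      then have "continuous_on {0..\<tau>} (\<lambda>q. norm (F i q))"
        using continuous_on_subset[OF F_cont] by (auto intro!: continuous_intros)
      then show "bounded ((\<lambda>q. norm (F i q)) ` {0..\<tau>})"
        by (intro compact_imp_bounded compact_continuous_image) auto
    qed
  qed
  then show ?thesis by (rule bounded_imp_bdd_above)
qed

lemma G0_upper: "i < N \<Longrightarrow> q \<in> {0..\<tau>} \<Longrightarrow> norm (F i q) \<le> G0"
proof -
  assume "i < N" "q \<in> {0..\<tau>}"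
  then have "norm (F i q) \<in> GS" unfolding GS_def by blast
  then show ?thesis unfolding G0_def by (rule cSup_upper[OF _ GS_bdd])
qed

lemma G0_nonneg: "0 \<le> G0"
proof -
  have "norm (F 0 0) \<le> G0" by (rule G0_upper) (use N tau_pos in auto)
  then show ?thesis by (rule order_trans[OF norm_ge_zero])
qed

lemma G0_le: "G0 \<le> Dv / (1 - d)"
proof -
  have "G0 \<le> Dv + d * G0"
  proof -
    have "Sup GS \<le> Dv + d * G0"
    proof (rule cSup_least)
      have "norm (F 0 0) \<in> GS" unfolding GS_def using N tau_pos by (intro UN_I[of 0]) auto
      then show "GS \<noteq> {}" by blast
      fix y assume "y \<in> GS"
      then obtain i q where i: "i < N" and q: "0 \<le> q" "q \<le> \<tau>" and y: "y = norm (F i q)"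
        by (auto simp: GS_def)
      have M0: "0 \<le> Dv + d * G0" using Dv_nonneg d_nonneg G0_nonneg by simp
      have "norm (F i q) \<le> Dv + d * G0"
      proof (rule F_bound[OF i M0])
        fix j assume j: "j \<in> {..<N} - {i}"
        show "norm (v j (q - \<tau>) - v i (q - \<sigma>)) \<le> Dv + d * G0"
        proof (cases "q \<le> \<sigma>")
          case True
          then have "norm (v j (q - \<tau>) - v i (q - \<sigma>)) \<le> Dv"
            using Dv[of j i "q - \<tau>" "q - \<sigma>"] j i q sig by auto
          then show ?thesis using d_nonneg G0_nonneg by (meson le_add_same_cancel1 mult_nonneg_nonneg order_trans)
        next
          case False
          have n1: "norm (v j (q - \<tau>) - v i 0) \<le> Dv"
            using Dv[of j i "q - \<tau>" 0] j i q tau_pos by auto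
          have n2: "norm (v i (q - \<sigma>) - v i 0) \<le> G0 * (q - \<sigma> - 0)"
            by (rule mvt_v[OF i]) (use False q sig in \<open>auto intro!: G0_upper[OF i]\<close>)
          have n3: "G0 * (q - \<sigma> - 0) \<le> d * G0"
            using G0_nonneg q d_def by (simp add: mult.commute mult_right_mono)
          have "norm (v j (q - \<tau>) - v i (q - \<sigma>)) \<le> norm (v j (q - \<tau>) - v i 0) + norm (v i 0 - v i (q - \<sigma>))"
            by (rule tri2)
          also have "\<dots> = norm (v j (q - \<tau>) - v i 0) + norm (v i (q - \<sigma>) - v i 0)"
            by (simp add: norm_minus_commute)
          finally show ?thesis using n1 n2 n3 by linarith
        qed
      qed
      then show "y \<le> Dv + d * G0" using y by simp
    qed
    then show "G0 \<le> Dv + d * G0" by (simp only: G0_def[symmetric])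
  qed
  then have "(1 - d) * G0 \<le> Dv" by (simp add: algebra_simps)
  then show ?thesis using dlt1 by (simp add: pos_le_divide_eq mult.commute)
qed

lemma trans_D:
  assumes s: "0 \<le> s" "s \<le> \<tau>" and i: "i < N" and j: "j < N"
  shows "norm (v i s - v j s) \<le> Dv * (1 + 2 * \<tau> / (1 - d))"
proof -
  have m: "norm (v l s - v l 0) \<le> G0 * (s - 0)" if "l < N" for l
    by (rule mvt_v[OF that]) (use s in \<open>auto intro!: G0_upper[OF that]\<close>)
  have "v i s - v j s = (v i 0 - v j 0) + (v i s - v i 0) - (v j s - v j 0)" by simp
  then have "norm (v i s - v j s) \<le> norm (v i 0 - v j 0) + norm (v i s - v i 0) + norm (v j s - v j 0)"
    by (metis tri3)
  also have "\<dots> \<le> Dv + G0 * s + G0 * s"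
  proof -
    have "norm (v i 0 - v j 0) \<le> Dv" using Dv[of i j 0 0] i j tau_pos by simp
    moreover have "norm (v i s - v i 0) \<le> G0 * s" using m[OF i] by simp
    moreover have "norm (v j s - v j 0) \<le> G0 * s" using m[OF j] by simp
    ultimately show ?thesis by linarith
  qed
  also have "\<dots> \<le> Dv + 2 * (Dv / (1 - d) * \<tau>)"
  proof -
    have "G0 * s \<le> G0 * \<tau>" using G0_nonneg s by (simp add: mult_left_mono)
    also have "\<dots> \<le> Dv / (1 - d) * \<tau>" by (rule mult_right_mono[OF G0_le]) (use tau_pos in simp)
    finally have h: "G0 * s \<le> Dv / (1 - d) * \<tau>" .
    show ?thesis using add_mono[OF h h] by (simp only: mult_2 add.assoc add_left_mono)
  qed
  also have "\<dots> = Dv * (1 + 2 * \<tau> / (1 - d))" by (simp add: algebra_simps)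
  finally show ?thesis .
qed

definition good where
  "good t \<longleftrightarrow> (\<forall>s i j. 0 \<le> s \<longrightarrow> s < t \<longrightarrow> i < N \<longrightarrow> j < N \<longrightarrow>
      norm (v i s - v j s) < b s \<and> norm (F i s) < G * b s)"

lemma drift:
  assumes g: "good t" and a0: "0 \<le> a0" "a0 \<le> c" "c \<le> t" and j: "j < N"
  shows "norm (v j c - v j a0) \<le> G * b a0 * (c - a0)"
proof (rule mvt_v[OF j a0(1,2)])
  fix s assume s: "a0 < s" "s < c"
  have "norm (F j s) < G * b s" using g s a0 j unfolding good_def by auto
  also have "\<dots> \<le> G * b a0" using b_mono[of a0 s] s G_pos by simp
  finally show "norm (F j s) \<le> G * b a0" by simp
qed

lemma bt_ge: "0 \<le> t \<Longrightarrow> t \<le> \<tau> \<Longrightarrow> B \<le> G * b t"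
proof -
  assume t: "0 \<le> t" "t \<le> \<tau>"
  have "B \<le> B * (G * exp (- C * \<tau>))" using G_ge1 Bpos by simp
  also have "\<dots> = G * b \<tau>" unfolding b_def by simp
  also have "\<dots> \<le> G * b t" using b_mono[of t \<tau>] t G_pos by simp
  finally show ?thesis .
qed

lemma one_dG: "(1 + d * G) * b (t - \<tau>) = G * b t"
proof -
  have "(1 + d * G) * b (t - \<tau>) = G * exp (- C * \<tau>) * (exp (C * \<tau>) * b t)"
    using G_eq b_shift by simp
  also have "\<dots> = G * b t * (exp (- C * \<tau>) * exp (C * \<tau>))" by (simp add: algebra_simps)
  also have "exp (- C * \<tau>) * exp (C * \<tau>) = 1" by (simp add: exp_add[symmetric])
  finally show ?thesis by simp
qed

lemma F_strict:
  assumes g: "good t" and t: "0 \<le> t" and i: "i < N"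
  shows "norm (F i t) < G * b t"
proof (rule F_bound_strict[OF i])
  fix j assume jA: "j \<in> {..<N} - {i}"
  then have j: "j < N" by simp
  show "norm (v j (t - \<tau>) - v i (t - \<sigma>)) < G * b t"
  proof (cases "t < \<sigma>")
    case True
    have "norm (v j (t - \<tau>) - v i (t - \<sigma>)) \<le> Dv"
      using Dv[of j i "t - \<tau>" "t - \<sigma>"] j i t True sig by auto
    also have "\<dots> < B" by (rule DvB)
    also have "\<dots> \<le> G * b t" using bt_ge t True sig by simp
    finally show ?thesis .
  next
    case False
    show ?thesis
    proof (cases "t < \<tau>")
      case True
      have n1: "norm (v j (t - \<tau>) - v i 0) \<le> Dv"
        using Dv[of j i "t - \<tau>" 0] j i t True tau_pos by auto
      have n2: "norm (v i (t - \<sigma>) - v i 0) \<le> G * b 0 * (t - \<sigma> - 0)"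
        by (rule drift[OF g _ _ _ i]) (use False sig in auto)
      have n3: "G * b 0 * (t - \<sigma> - 0) \<le> G * B * d"
        using G_pos Bpos True d_def unfolding b_def by simp
      have "norm (v j (t - \<tau>) - v i (t - \<sigma>)) \<le> norm (v j (t - \<tau>) - v i 0) + norm (v i (t - \<sigma>) - v i 0)"
        using tri2[of "v j (t - \<tau>)" "v i (t - \<sigma>)" "v i 0"] by (simp add: norm_minus_commute)
      also have "\<dots> < B + G * B * d" using n1 n2 n3 DvB by linarith
      also have "\<dots> = (1 + d * G) * b (t - t)" unfolding b_def by (simp add: algebra_simps)
      also have "\<dots> \<le> (1 + d * G) * b (t - \<tau>)"
        using b_mono[of "t - \<tau>" "t - t"] True d_nonneg G_pos by (simp add: mult_left_mono)
      also have "\<dots> = G * b t" by (rule one_dG)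
      finally show ?thesis .
    next
      case False
      have n1: "norm (v j (t - \<tau>) - v i (t - \<tau>)) < b (t - \<tau>)"
        using g j i False tau_pos unfolding good_def by auto
      have n2: "norm (v i (t - \<sigma>) - v i (t - \<tau>)) \<le> G * b (t - \<tau>) * (t - \<sigma> - (t - \<tau>))"
        by (rule drift[OF g _ _ _ i]) (use False sig in auto)
      have "norm (v j (t - \<tau>) - v i (t - \<sigma>)) \<le> norm (v j (t - \<tau>) - v i (t - \<tau>)) + norm (v i (t - \<sigma>) - v i (t - \<tau>))"
        using tri2[of "v j (t - \<tau>)" "v i (t - \<sigma>)" "v i (t - \<tau>)"] by (simp add: norm_minus_commute)
      also have "\<dots> < b (t - \<tau>) + G * b (t - \<tau>) * d" using n1 n2 d_def by simp
      also have "\<dots> = (1 + d * G) * b (t - \<tau>)" by (simp add: algebra_simps)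
      also have "\<dots> = G * b t" by (rule one_dG)
      finally show ?thesis .
    qed
  qed
qed

lemma shift_deriv: "(x j has_vector_derivative v j (s - l)) (at (s - l)) \<Longrightarrow>
   ((\<lambda>s. x j (s - l)) has_vector_derivative v j (s - l)) (at s)"
proof -
  assume h: "(x j has_vector_derivative v j (s - l)) (at (s - l))"
  have "((\<lambda>s. s - l) has_vector_derivative 1) (at s)"
    unfolding has_real_derivative_iff_has_vector_derivative[symmetric]
    by (auto intro!: derivative_eq_intros)
  from vector_diff_chain_at[OF this h[unfolded o_def]] show ?thesis by (simp add: o_def)
qed

lemma pos_bound:
  assumes g: "good t" and i: "i < N" and j: "j < N" and l: "0 \<le> l" "l \<le> d"
    and r: "-\<tau> + l \<le> r" "r \<le> t"
  shows "norm (x i r - x j (r - l)) \<le> P"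
proof -
  define H where "H = (1 + d * G) * exp (C * d) * B"
  have H0: "H \<ge> 0" unfolding H_def using d_nonneg G_pos Bpos by simp
  have DxP: "Dx + H / C \<le> P" using posb unfolding H_def by simp
  have HC0: "0 \<le> H / C" using H0 Cpos by simp
  show ?thesis
  proof (cases "r \<le> 0")
    case True
    then have "norm (x i r - x j (r - l)) \<le> Dx" using Dx[of i j r "r - l"] i j r l d_le by auto
    then show ?thesis using DxP HC0 by linarith
  next
    case False
    have y0: "norm (x i 0 - x j (0 - l)) \<le> Dx" using Dx[of i j 0 "0 - l"] i j l d_le tau_pos by auto
    have "norm ((x i r - x j (r - l)) - (x i 0 - x j (0 - l))) \<le> H / C * exp (- C * 0)"
    proof (rule mvt_exp[where f' = "\<lambda>s. v i s - v j (s - l)"])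
      show "0 \<le> r" using False by simp
      show "C > 0" by (rule Cpos)
      show "H \<ge> 0" by (rule H0)
      have c1: "continuous_on {0..r} (x i)"
        by (rule continuous_on_subset[OF x_cont[OF i]]) (use tau_pos in auto)
      have c2: "continuous_on {0..r} (\<lambda>s. x j (s - l))"
        by (rule continuous_on_compose2[OF x_cont[OF j]]) (use l d_le in \<open>auto intro!: continuous_intros\<close>)
      show "continuous_on {0..r} (\<lambda>s. x i s - x j (s - l))" by (intro continuous_intros c1 c2)
      fix s assume s: "0 < s" "s < r"
      have d1: "(x i has_vector_derivative v i s) (at s)" by (rule x_deriv_at[OF i]) (use s tau_pos in auto)
      have d2: "((\<lambda>s. x j (s - l)) has_vector_derivative v j (s - l)) (at s)"
        by (rule shift_deriv, rule x_deriv_at[OF j]) (use s l d_le in auto)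
      show "((\<lambda>s. x i s - x j (s - l)) has_vector_derivative v i s - v j (s - l)) (at s)"
        by (rule has_vector_derivative_diff[OF d1 d2])
      show "norm (v i s - v j (s - l)) \<le> H * exp (- C * s)"
      proof (cases "l \<le> s")
        case True
        have n1: "norm (v i s - v j s) < b s" using g s r i j unfolding good_def by auto
        have n2: "norm (v j s - v j (s - l)) \<le> G * b (s - l) * (s - (s - l))"
          by (rule drift[OF g _ _ _ j]) (use True s r l in auto)
        have "norm (v i s - v j (s - l)) \<le> norm (v i s - v j s) + norm (v j s - v j (s - l))"
          by (rule tri2)
        also have "\<dots> \<le> b s + G * (exp (C * l) * b s) * l" using n1 n2 b_shift[of s l] by simp
        also have "\<dots> = b s * (1 + G * (l * exp (C * l)))" by (simp add: algebra_simps)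
        also have "\<dots> \<le> b s * ((1 + d * G) * exp (C * d))"
        proof -
          have "l * exp (C * l) \<le> d * exp (C * d)"
            using l Cpos by (intro mult_mono) auto
          then have "G * (l * exp (C * l)) \<le> G * (d * exp (C * d))" using G_pos by simp
          moreover have "1 \<le> exp (C * d)" using Cpos d_nonneg by simp
          moreover have "(1 + d * G) * exp (C * d) = exp (C * d) + G * (d * exp (C * d))"
            by (simp add: algebra_simps)
          ultimately have "1 + G * (l * exp (C * l)) \<le> (1 + d * G) * exp (C * d)"
            by linarith
          then show ?thesis using b_pos[of s] by simp
        qed
        also have "\<dots> = H * exp (- C * s)" unfolding H_def b_def by simp
        finally show ?thesis .
      next
        case False
        have n1: "norm (v i s - v i 0) \<le> G * b 0 * (s - 0)"
          by (rule drift[OF g _ _ _ i]) (use s r in auto)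
        have n2: "norm (v i 0 - v j (s - l)) \<le> Dv" using Dv[of i j 0 "s - l"] i j False s l d_le tau_pos by auto
        have "norm (v i s - v j (s - l)) \<le> norm (v i s - v i 0) + norm (v i 0 - v j (s - l))"
          by (rule tri2)
        also have "\<dots> \<le> G * B * d + B"
        proof -
          have "G * b 0 * (s - 0) \<le> G * B * d" using G_pos Bpos False l s unfolding b_def by simp
          then show ?thesis using n1 n2 DvB by linarith
        qed
        also have "\<dots> = (1 + d * G) * B" by (simp add: algebra_simps)
        also have "\<dots> \<le> (1 + d * G) * B * exp (C * (d - s))"
        proof -
          have "1 \<le> exp (C * (d - s))" using Cpos False l by simp
          moreover have "0 \<le> (1 + d * G) * B" using d_nonneg G_pos Bpos by simp
          ultimately show ?thesis using mult_left_mono[of 1 "exp (C * (d - s))" "(1 + d * G) * B"] by simp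
        qed
        also have "\<dots> = H * exp (- C * s)" unfolding H_def
          by (simp add: algebra_simps exp_add[symmetric] exp_diff add_divide_distrib)
        finally show ?thesis .
      qed
    qed
    then have "norm ((x i r - x j (r - l)) - (x i 0 - x j (0 - l))) \<le> H / C" by simp
    then have "norm (x i r - x j (r - l)) \<le> Dx + H / C"
      using y0 norm_triangle_ineq2[of "x i r - x j (r - l)" "x i 0 - x j (0 - l)"] by linarith
    then show ?thesis using DxP by linarith
  qed
qed

lemma P_nonneg: "0 \<le> P"
proof -
  have "0 \<le> (1 + d * G) * exp (C * d) * B / C" using d_nonneg G_pos Bpos Cpos by simp
  then show ?thesis using posb Dx_nonneg by linarith
qed

lemma D_strict:
  assumes g: "good t" and t: "\<tau> < t"
    and ns: "\<And>i j. i < N \<Longrightarrow> j < N \<Longrightarrow> norm (v i t - v j t) \<le> b t"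
    and i: "i < N" and k: "k < N"
  shows "norm (v i t - v k t) < b t"
proof (rule ccontr)
  assume "\<not> ?thesis"
  then have eq: "norm (v i t - v k t) = b t" using ns[OF i k] by simp
  define w where "w = v i t - v k t"
  have wn: "norm w = b t" using eq w_def by simp
  have ww: "w \<bullet> w = (b t)^2"
  proof -
    have "(norm w)^2 = w \<bullet> w" by (rule power2_norm_eq_inner)
    then show ?thesis using wn by simp
  qed
  have t0: "0 < t" using t tau_pos by simp
  define ast where "ast = \<psi> P / real (N - 1)"
  have ast0: "ast \<ge> 0" using psi_pos[OF P_nonneg] N1 unfolding ast_def by simp
  have aij: "a i' j t \<ge> ast" if "i' < N" "j < N" for i' j
  proof -
    have "norm (x i' (t - \<sigma>) - x j (t - \<sigma> - d)) \<le> P"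
      by (rule pos_bound[OF g that]) (use d_nonneg sig t d_def in auto)
    moreover have "t - \<sigma> - d = t - \<tau>" using d_def by simp
    ultimately show ?thesis unfolding ast_def by (intro a_ge) simp
  qed
  define \<rho>1 where "\<rho>1 = G * b (t - \<tau>) * \<tau>"
  define \<rho>2 where "\<rho>2 = G * b (t - \<tau>) * \<sigma>"
  have r1: "\<rho>1 \<ge> 0" unfolding \<rho>1_def using G_pos b_pos[of "t - \<tau>"] tau_pos by simp
  have dp: "norm (v j (t - \<tau>) - v j t) \<le> \<rho>1" if "j < N" for j
  proof -
    have "norm (v j t - v j (t - \<tau>)) \<le> G * b (t - \<tau>) * (t - (t - \<tau>))"
      by (rule drift[OF g _ _ _ that]) (use t tau_pos in auto)
    then show ?thesis unfolding \<rho>1_def by (simp add: norm_minus_commute)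
  qed
  have dq: "norm (v j t - v j (t - \<sigma>)) \<le> \<rho>2" if "j < N" for j
  proof -
    have "norm (v j t - v j (t - \<sigma>)) \<le> G * b (t - \<sigma>) * (t - (t - \<sigma>))"
      by (rule drift[OF g _ _ _ that]) (use t sig in auto)
    also have "\<dots> \<le> G * b (t - \<tau>) * \<sigma>"
      using b_mono[of "t - \<tau>" "t - \<sigma>"] sig G_pos by (simp add: mult_right_mono)
    finally show ?thesis unfolding \<rho>2_def .
  qed
  have cs: "w \<bullet> (v j t - v l t) \<le> w \<bullet> w" if "j < N" "l < N" for j l
  proof -
    have "w \<bullet> (v j t - v l t) \<le> norm w * norm (v j t - v l t)" by (rule norm_cauchy_schwarz)
    also have "\<dots> \<le> norm w * b t" using ns[OF that] by (simp add: mult_left_mono)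
    also have "\<dots> = w \<bullet> w" using wn ww by (simp add: power2_eq_square)
    finally show ?thesis .
  qed
  have S1: "w \<bullet> F i t \<le> ast * (\<Sum>j\<in>{..<N} - {i}. w \<bullet> (v j t - v i t)) + norm w * (\<rho>1 + \<rho>2)"
    unfolding F_def
  proof (rule side[where \<alpha> = "\<lambda>j. a i j t" and u = "\<lambda>j. v j t" and p = "\<lambda>j. v j (t - \<tau>)"])
    show "finite ({..<N} - {i})" by simp
    show "ast \<le> a i j t" if "j \<in> {..<N} - {i}" for j using aij[OF i] that by simp
    show "0 \<le> ast" by (rule ast0)
    show "(\<Sum>j\<in>{..<N} - {i}. a i j t) \<le> 1" by (rule sum_a[OF i])
    show "w \<bullet> (v j t - v i t) \<le> 0" if "j \<in> {..<N} - {i}" for j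
    proof -
      have "w \<bullet> (v j t - v i t) = w \<bullet> (v j t - v k t) - w \<bullet> w" unfolding w_def
        by (simp add: inner_diff_right)
      then show ?thesis using cs[of j k] that k by simp
    qed
    show "norm (v j (t - \<tau>) - v j t) \<le> \<rho>1" if "j \<in> {..<N} - {i}" for j using dp that by simp
    show "norm (v i t - v i (t - \<sigma>)) \<le> \<rho>2" using dq[OF i] .
    show "0 \<le> \<rho>1" by (rule r1)
  qed
  have S2: "(-w) \<bullet> F k t \<le> ast * (\<Sum>j\<in>{..<N} - {k}. (-w) \<bullet> (v j t - v k t)) + norm (-w) * (\<rho>1 + \<rho>2)"
    unfolding F_def
  proof (rule side[where \<alpha> = "\<lambda>j. a k j t" and u = "\<lambda>j. v j t" and p = "\<lambda>j. v j (t - \<tau>)"])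
    show "finite ({..<N} - {k})" by simp
    show "ast \<le> a k j t" if "j \<in> {..<N} - {k}" for j using aij[OF k] that by simp
    show "0 \<le> ast" by (rule ast0)
    show "(\<Sum>j\<in>{..<N} - {k}. a k j t) \<le> 1" by (rule sum_a[OF k])
    show "(-w) \<bullet> (v j t - v k t) \<le> 0" if "j \<in> {..<N} - {k}" for j
    proof -
      have "(-w) \<bullet> (v j t - v k t) = w \<bullet> (v i t - v j t) - w \<bullet> w" unfolding w_def
        by (simp add: inner_diff_right inner_diff_left algebra_simps)
      then show ?thesis using cs[of i j] that i by simp
    qed
    show "norm (v j (t - \<tau>) - v j t) \<le> \<rho>1" if "j \<in> {..<N} - {k}" for j using dp that by simp
    show "norm (v k t - v k (t - \<sigma>)) \<le> \<rho>2" using dq[OF k] .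
    show "0 \<le> \<rho>1" by (rule r1)
  qed
  have sum1: "(\<Sum>j\<in>{..<N} - {i}. w \<bullet> (v j t - v i t)) = (\<Sum>j\<in>{..<N}. w \<bullet> (v j t - v i t))"
    using i by (simp add: sum_diff1)
  have sum2: "(\<Sum>j\<in>{..<N} - {k}. (-w) \<bullet> (v j t - v k t)) = (\<Sum>j\<in>{..<N}. (-w) \<bullet> (v j t - v k t))"
    using k by (simp add: sum_diff1)
  have sum3: "(\<Sum>j\<in>{..<N}. w \<bullet> (v j t - v i t)) + (\<Sum>j\<in>{..<N}. (-w) \<bullet> (v j t - v k t))
      = - (real N * (w \<bullet> w))"
  proof -
    have "(\<Sum>j\<in>{..<N}. w \<bullet> (v j t - v i t)) + (\<Sum>j\<in>{..<N}. (-w) \<bullet> (v j t - v k t))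
        = (\<Sum>j\<in>{..<N}. w \<bullet> (v j t - v i t) + (-w) \<bullet> (v j t - v k t))"
      by (rule sum.distrib[symmetric])
    also have "\<dots> = (\<Sum>j\<in>{..<N}. - (w \<bullet> w))"
    proof (rule sum.cong[OF refl])
      fix j
      have "w \<bullet> (v j t - v i t) + (-w) \<bullet> (v j t - v k t) = - (w \<bullet> (v i t - v k t))"
        by (simp add: inner_diff_right algebra_simps)
      then show "w \<bullet> (v j t - v i t) + (-w) \<bullet> (v j t - v k t) = - (w \<bullet> w)"
        unfolding w_def by simp
    qed
    also have "\<dots> = - (real N * (w \<bullet> w))" by simp
    finally show ?thesis .
  qed
  have astN: "\<psi> P \<le> ast * real N"
  proof -
    have "ast * real N = \<psi> P * (real N / real (N - 1))" unfolding ast_def by simp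
    moreover have "1 \<le> real N / real (N - 1)" using N1 by simp
    moreover have "0 \<le> \<psi> P" using psi_pos[OF P_nonneg] by simp
    ultimately show ?thesis using mult_left_mono[of 1 "real N / real (N - 1)" "\<psi> P"] by simp
  qed
  define \<kappa> where "\<kappa> = 2 * (\<tau> + \<sigma>) * G * exp (C * \<tau>)"
  have key: "w \<bullet> (F i t - F k t) \<le> (\<kappa> - \<psi> P) * (b t)^2"
  proof -
    have "w \<bullet> (F i t - F k t) = w \<bullet> F i t + (-w) \<bullet> F k t" by (simp add: inner_diff_right)
    also have "\<dots> \<le> ast * (- (real N * (w \<bullet> w))) + 2 * (norm w * (\<rho>1 + \<rho>2))"
    proof -
      define Y1 where "Y1 = (\<Sum>j\<in>{..<N}. w \<bullet> (v j t - v i t))"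
      define Y2 where "Y2 = (\<Sum>j\<in>{..<N}. (-w) \<bullet> (v j t - v k t))"
      have s1: "w \<bullet> F i t \<le> ast * Y1 + norm w * (\<rho>1 + \<rho>2)" using S1 sum1 unfolding Y1_def by simp
      have s2: "(-w) \<bullet> F k t \<le> ast * Y2 + norm w * (\<rho>1 + \<rho>2)" using S2 sum2 unfolding Y2_def by simp
      have "ast * Y1 + ast * Y2 = ast * (- (real N * (w \<bullet> w)))"
        using sum3 unfolding Y1_def Y2_def by (simp only: distrib_left[symmetric])
      then show ?thesis using s1 s2 by linarith
    qed
    also have "\<dots> \<le> - (\<psi> P * (b t)^2) + 2 * (norm w * (\<rho>1 + \<rho>2))"
    proof -
      have "\<psi> P * (b t)^2 \<le> ast * real N * (b t)^2" using astN by (simp add: mult_right_mono)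
      then show ?thesis using ww by (simp add: algebra_simps)
    qed
    also have "2 * (norm w * (\<rho>1 + \<rho>2)) = \<kappa> * (b t)^2"
      unfolding \<rho>1_def \<rho>2_def \<kappa>_def wn b_shift by (simp add: algebra_simps power2_eq_square)
    finally show ?thesis by (simp add: algebra_simps)
  qed
  define \<phi> where "\<phi> s = (v i s - v k s) \<bullet> (v i s - v k s) - (b s)^2" for s
  have gd: "((\<lambda>s. v i s - v k s) has_derivative (\<lambda>h. h *\<^sub>R (F i t - F k t))) (at t)"
    using has_vector_derivative_diff[OF v_deriv'[OF i t0] v_deriv'[OF k t0]]
    unfolding has_vector_derivative_def .
  have d1: "((\<lambda>s. (v i s - v k s) \<bullet> (v i s - v k s)) has_real_derivative (2 * (w \<bullet> (F i t - F k t)))) (at t)"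
    unfolding has_field_derivative_def
    by (rule has_derivative_eq_rhs[OF has_derivative_inner[OF gd gd]])
       (auto simp: fun_eq_iff w_def inner_commute algebra_simps)
  have d2: "((\<lambda>s. (b s)^2) has_real_derivative (- 2 * C * (b t)^2)) (at t)"
    unfolding b_def
    by (auto intro!: derivative_eq_intros simp: power2_eq_square algebra_simps)
  have dphi: "(\<phi> has_real_derivative (2 * (w \<bullet> (F i t - F k t)) - (- 2 * C * (b t)^2))) (at t)"
    unfolding \<phi>_def by (rule DERIV_diff[OF d1 d2])
  have neg: "2 * (w \<bullet> (F i t - F k t)) - (- 2 * C * (b t)^2) < 0"
  proof -
    have "0 < (b t)^2" using b_pos[of t] by simp
    moreover have "\<kappa> - \<psi> P + C < 0" using rate unfolding \<kappa>_def by simp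
    ultimately have "(\<kappa> - \<psi> P + C) * (b t)^2 < 0" by (simp add: mult_neg_pos)
    then show ?thesis using key by (simp add: algebra_simps)
  qed
  obtain \<delta> where \<delta>: "\<delta> > 0" "\<And>h. h > 0 \<Longrightarrow> h < \<delta> \<Longrightarrow> \<phi> t < \<phi> (t - h)"
    using DERIV_neg_dec_left[OF dphi neg] by blast
  define h where "h = min \<delta> t / 2"
  have h: "h > 0" "h < \<delta>" "h \<le> t" using \<delta>(1) t0 unfolding h_def by auto
  have "\<phi> t = 0" unfolding \<phi>_def using ww w_def by simp
  moreover have "\<phi> (t - h) < 0"
  proof -
    have "norm (v i (t - h) - v k (t - h)) < b (t - h)"
      using g h i k unfolding good_def by auto
    then have "(norm (v i (t - h) - v k (t - h)))^2 < (b (t - h))^2"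
      by (intro power_strict_mono) auto
    then show ?thesis unfolding \<phi>_def by (simp add: power2_norm_eq_inner)
  qed
  ultimately show False using \<delta>(2)[OF h(1,2)] by simp
qed

lemma barrier:
  "\<forall>t\<ge>0. \<forall>k\<in>{..<N} \<times> {..<N}. max (norm (v (fst k) t - v (snd k) t) - b t) (norm (F (fst k) t) - G * b t) < 0"
proof (rule first_crossing)
  show "finite ({..<N} \<times> {..<N})" by simp
  show "continuous_on {0..} (\<lambda>t. max (norm (v (fst k) t - v (snd k) t) - b t) (norm (F (fst k) t) - G * b t))"
    if "k \<in> {..<N} \<times> {..<N}" for k
  proof -
    have v1: "continuous_on {0..} (v (fst k))" "continuous_on {0..} (v (snd k))"
      using that continuous_on_subset[OF v_cont] tau_pos by (auto simp: subset_eq)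
    have f1: "continuous_on {0..} (F (fst k))" using that F_cont by auto
    show ?thesis unfolding b_def by (intro continuous_intros v1 f1)
  qed
  fix t :: real assume t0: "0 \<le> t"
    and H1: "\<forall>s k. 0 \<le> s \<longrightarrow> s < t \<longrightarrow> k \<in> {..<N} \<times> {..<N} \<longrightarrow>
      max (norm (v (fst k) s - v (snd k) s) - b s) (norm (F (fst k) s) - G * b s) < 0"
    and H2: "0 < t \<longrightarrow> (\<forall>k\<in>{..<N} \<times> {..<N}.
      max (norm (v (fst k) t - v (snd k) t) - b t) (norm (F (fst k) t) - G * b t) \<le> 0)"
  have g: "good t" unfolding good_def
  proof (intro allI impI)
    fix s i j assume s: "0 \<le> s" "s < t" and ij: "i < N" "j < N"
    from H1[rule_format, OF s, of "(i, j)"] ij show "norm (v i s - v j s) < b s \<and> norm (F i s) < G * b s"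
      by simp
  qed
  show "\<forall>k\<in>{..<N} \<times> {..<N}. max (norm (v (fst k) t - v (snd k) t) - b t) (norm (F (fst k) t) - G * b t) < 0"
  proof
    fix k assume k: "k \<in> {..<N} \<times> {..<N}"
    then obtain i j where ij: "k = (i, j)" "i < N" "j < N" by auto
    have F1: "norm (F i t) < G * b t" by (rule F_strict[OF g t0 ij(2)])
    have D1: "norm (v i t - v j t) < b t"
    proof (cases "t \<le> \<tau>")
      case True
      have "norm (v i t - v j t) \<le> Dv * (1 + 2 * \<tau> / (1 - d))" by (rule trans_D) (use t0 True ij in auto)
      also have "\<dots> < B * exp (- C * \<tau>)" by (rule transB)
      also have "\<dots> = b \<tau>" unfolding b_def ..
      also have "\<dots> \<le> b t" by (rule b_mono[OF True])
      finally show ?thesis .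
    next
      case False
      show ?thesis
      proof (rule D_strict[OF g _ _ ij(2,3)])
        show "\<tau> < t" using False by simp
        fix i' j' assume "i' < N" "j' < N"
        then show "norm (v i' t - v j' t) \<le> b t"
          using H2 False tau_pos by force
      qed
    qed
    show "max (norm (v (fst k) t - v (snd k) t) - b t) (norm (F (fst k) t) - G * b t) < 0"
      using F1 D1 ij by simp
  qed
qed

lemma good_all: "good t"
  unfolding good_def using barrier by fastforce

lemma decay: "0 \<le> t \<Longrightarrow> i < N \<Longrightarrow> j < N \<Longrightarrow> norm (v i t - v j t) < B * exp (- C * t)"
  using good_all[of "t + 1"] unfolding good_def b_def by auto

lemma xbound: "0 \<le> t \<Longrightarrow> i < N \<Longrightarrow> j < N \<Longrightarrow> norm (x i t - x j t) \<le> P"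
  using pos_bound[OF good_all, of i j 0 t t] tau_pos d_nonneg by simp

end


lemma Delta0_bound:
  fixes y :: "nat \<Rightarrow> real \<Rightarrow> real ^ 'd"
  assumes cont: "\<And>i. i < N \<Longrightarrow> continuous_on {-\<tau>..0} (y i)"
    and ij: "i < N" "j < N" and st: "s \<in> {-\<tau>..0}" "t \<in> {-\<tau>..0}"
  shows "norm (y i s - y j t) \<le> Delta0 N \<tau> y"
proof -
  have "bounded (\<Union>i\<in>{..<N}. y i ` {-\<tau>..0})"
  proof (rule bounded_UN)
    show "finite {..<N}" by simp
    show "\<forall>i\<in>{..<N}. bounded (y i ` {-\<tau>..0})"
      using cont by (auto intro!: compact_imp_bounded compact_continuous_image)
  qed
  then obtain M where M: "\<And>z. z \<in> (\<Union>i\<in>{..<N}. y i ` {-\<tau>..0}) \<Longrightarrow> norm z \<le> M"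
    unfolding bounded_iff by blast
  define S4 where "S4 = {(i, j, s, t). i < N \<and> j < N \<and> s \<in> {-\<tau>..0} \<and> t \<in> {-\<tau>..0}}"
  define f where "f = (\<lambda>p. case p of (i, j, s, t) \<Rightarrow> norm (y i s - y j t))"
  have bdd: "bdd_above (f ` S4)"
  proof (rule bdd_aboveI2)
    fix p assume "p \<in> S4"
    then obtain i j s t where p: "p = (i, j, s, t)" "i < N" "j < N" "s \<in> {-\<tau>..0}" "t \<in> {-\<tau>..0}"
      unfolding S4_def by auto
    have "norm (y i s - y j t) \<le> norm (y i s) + norm (y j t)" by (rule norm_triangle_ineq4)
    also have "\<dots> \<le> M + M"
    proof (rule add_mono)
      show "norm (y i s) \<le> M" using p by (intro M) blast
      show "norm (y j t) \<le> M" using p by (intro M) blast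
    qed
    finally show "f p \<le> M + M" unfolding f_def p by simp
  qed
  have mem: "(i, j, s, t) \<in> S4" unfolding S4_def using ij st by simp
  have "f (i, j, s, t) \<le> (SUP p\<in>S4. f p)" by (rule cSUP_upper[OF mem bdd])
  then show ?thesis unfolding Delta0_def S4_def[symmetric] f_def[symmetric] by (simp add: f_def)
qed

lemma Max_pairs_le:
  fixes g :: "nat \<Rightarrow> nat \<Rightarrow> real"
  assumes "0 < N" "\<And>i j. i < N \<Longrightarrow> j < N \<Longrightarrow> g i j \<le> M"
  shows "Max {g i j | i j. i < N \<and> j < N} \<le> M"
proof -
  have eq: "{g i j | i j. i < N \<and> j < N} = (\<lambda>(i, j). g i j) ` ({..<N} \<times> {..<N})" by auto
  have "finite {g i j | i j. i < N \<and> j < N}" unfolding eq by simp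
  moreover have "{g i j | i j. i < N \<and> j < N} \<noteq> {}" using assms(1) by auto
  ultimately show ?thesis using assms(2) by (auto simp: Max_le_iff)
qed

lemma Max_pairs_ge:
  fixes g :: "nat \<Rightarrow> nat \<Rightarrow> real"
  assumes "i < N" "j < N"
  shows "g i j \<le> Max {g i j | i j. i < N \<and> j < N}"
proof -
  have eq: "{g i j | i j. i < N \<and> j < N} = (\<lambda>(i, j). g i j) ` ({..<N} \<times> {..<N})" by auto
  have "finite {g i j | i j. i < N \<and> j < N}" unfolding eq by simp
  then show ?thesis using assms by (intro Max_ge) auto
qed

lemma exp_decay_lim: fixes B C :: real shows "C > 0 \<Longrightarrow> ((\<lambda>t. B * exp (- C * t)) \<longlongrightarrow> 0) at_top"
proof -
  assume C: "C > 0"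
  have "filterlim (\<lambda>t. - C * t) at_bot at_top"
    using filterlim_tendsto_neg_mult_at_bot[of "\<lambda>_. - C" "- C" at_top "\<lambda>t. t"] C filterlim_ident by auto
  then have "((\<lambda>t. exp (- C * t)) \<longlongrightarrow> 0) at_top"
    using filterlim_compose[OF exp_at_bot] by simp
  then show ?thesis using tendsto_mult[OF tendsto_const[of B]] by fastforce
qed


theorem theorem1p2:
  fixes N K :: nat and \<sigma> \<tau> \<beta> C :: real and \<psi> :: "real \<Rightarrow> real"
    and x0 v0 x v :: "nat \<Rightarrow> real \<Rightarrow> real ^ 'd"
  assumes N: "N \<ge> 2"
    and sig: "0 < \<sigma>" "\<sigma> \<le> \<tau>"
    and psi_cont: "continuous_on {0..} \<psi>"
    and psi_mono: "\<And>s t. 0 \<le> s \<Longrightarrow> s \<le> t \<Longrightarrow> \<psi> t \<le> \<psi> s"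
    and psi_pos: "\<And>s. 0 \<le> s \<Longrightarrow> \<psi> s > 0"
    and psi_le1: "\<And>s. 0 \<le> s \<Longrightarrow> \<psi> s \<le> 1"
    and x0_deriv: "\<And>i t. i < N \<Longrightarrow> t \<in> {-\<tau>..0} \<Longrightarrow>
                     (x0 i has_vector_derivative v0 i t) (at t within {-\<tau>..0})"
    and v0_cont: "\<And>i. i < N \<Longrightarrow> continuous_on {-\<tau>..0} (v0 i)"
    and init_x: "\<And>i t. i < N \<Longrightarrow> t \<in> {-\<tau>..0} \<Longrightarrow> x i t = x0 i t"
    and init_v: "\<And>i t. i < N \<Longrightarrow> t \<in> {-\<tau>..0} \<Longrightarrow> v i t = v0 i t"
    and x_deriv: "\<And>i t. i < N \<Longrightarrow> t \<ge> -\<tau> \<Longrightarrow>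
                     (x i has_vector_derivative v i t) (at t within {-\<tau>..})"
    and v_cont: "\<And>i. i < N \<Longrightarrow> continuous_on {-\<tau>..} (v i)"
    and v_deriv: "\<And>i t. i < N \<Longrightarrow> t > 0 \<Longrightarrow>
                     (v i has_vector_derivative
                        (\<Sum>j\<in>{..<N} - {i}.
                           (\<psi> (norm (x i (t - \<sigma>) - x j (t - \<tau>))) / real (N - 1))
                             *\<^sub>R (v j (t - \<tau>) - v i (t - \<sigma>)))) (at t)"
    and K_def: "K = (LEAST k::nat. real k * \<sigma> \<ge> 2 * \<tau>)"
    and beta: "\<beta> > 0" "4 * \<tau> \<le> \<beta> * (2 * exp (-2 * \<tau>) - 1)"
    and Cpos: "C > 0"
    and Ccond: "exp (C * \<tau>) * (4 * \<tau> * exp (C * \<tau>) + \<beta> * (1 - exp (-2 * \<tau>))) + C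
      \<le> \<psi> (Delta0 N \<tau> x0
             + (Zs \<sigma> K - (1 + \<sigma>) * (Zs \<sigma> (K - 1) + 1)) * Delta0 N \<tau> v0
             + exp (C * \<tau>) / C
                 * (1 + exp (2 * \<tau> + C * \<sigma>) / \<beta> + exp (C * \<tau>) * (\<tau> - \<sigma>))
                 * (Zs \<sigma> K + Zs \<sigma> (K - 1) * \<beta> * (1 - (1 + 2 * \<tau>) * exp (-2 * \<tau>)))
                 * Delta0 N \<tau> v0)"
  shows "bdd_above (dX N x ` {0..})
       \<and> ((\<lambda>t. dX N v t) \<longlongrightarrow> 0) at_top
       \<and> (\<exists>A>0. \<forall>t\<ge>0. dX N v t \<le> A * exp (- C * t))"
proof -
  have tau: "0 < \<tau>" using sig by simp
  define Dx where "Dx = Delta0 N \<tau> x0"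
  define Dv where "Dv = Delta0 N \<tau> v0"
  have x0c: "continuous_on {-\<tau>..0} (x0 i)" if "i < N" for i
    unfolding continuous_on_eq_continuous_within
  proof
    fix t assume "t \<in> {-\<tau>..0}"
    then show "continuous (at t within {-\<tau>..0}) (x0 i)"
      using has_vector_derivative_continuous[OF x0_deriv[OF that]] by simp
  qed
  have DxB: "norm (x i s - x j t) \<le> Dx" if "i < N" "j < N" "s \<in> {-\<tau>..0}" "t \<in> {-\<tau>..0}" for i j s t
    using Delta0_bound[OF x0c that] init_x that unfolding Dx_def by simp
  have DvB: "norm (v i s - v j t) \<le> Dv" if "i < N" "j < N" "s \<in> {-\<tau>..0}" "t \<in> {-\<tau>..0}" for i j s t
    using Delta0_bound[OF v0_cont that] init_v that unfolding Dv_def by simp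
  have Dx0: "0 \<le> Dx" using DxB[of 0 0 0 0] N tau by simp
  have Dv0: "0 \<le> Dv" using DvB[of 0 0 0 0] N tau by simp
  have Kex: "\<exists>k::nat. real k * \<sigma> \<ge> 2 * \<tau>"
  proof -
    obtain n :: nat where "2 * \<tau> < real n * \<sigma>" using reals_Archimedean3[OF sig(1)] by blast
    then show ?thesis by (intro exI[of _ n]) simp
  qed
  have K2: "K \<ge> 2"
  proof (rule ccontr)
    assume "\<not> K \<ge> 2"
    then have "real K \<le> 1" by simp
    moreover have "real K * \<sigma> \<ge> 2 * \<tau>" unfolding K_def by (rule LeastI_ex[OF Kex])
    ultimately have "2 * \<tau> \<le> \<sigma>" using sig by (smt (verit) mult_right_mono mult_cancel_right1)
    then show False using sig tau by simp
  qed
  then obtain m where m: "K = m + 2" by (metis add.commute le_Suc_ex)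
  have Km1: "K - 1 = m + 1" using m by simp
  have ZK: "Zs \<sigma> K \<ge> 3" using Zs_mono[OF sig(1), of K] K2 by simp
  have ZK1: "Zs \<sigma> (K - 1) \<ge> 1" using Zs_mono[OF sig(1), of "K - 1"] by simp
  define W where "W = Zs \<sigma> K - (1 + \<sigma>) * (Zs \<sigma> (K - 1) + 1)"
  have W0: "W \<ge> 0"
  proof -
    have "W = (1 + \<sigma>) * (Zs \<sigma> (m + 1) - Zs \<sigma> m - 1)"
      unfolding W_def Km1 m using Zs_rec[OF sig(1), of m] by (simp add: algebra_simps)
    moreover have "Zs \<sigma> (m + 1) - Zs \<sigma> m - 1 \<ge> 0" using Zs_mono[OF sig(1), of m] by simp
    ultimately show ?thesis using sig by simp
  qed
  define e1 where "e1 = exp (C * \<tau>)"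
  have e1ge: "1 \<le> e1" unfolding e1_def using Cpos tau by simp
  define Q where "Q = 1 + exp (2 * \<tau> + C * \<sigma>) / \<beta> + exp (C * \<tau>) * (\<tau> - \<sigma>)"
  define Z where "Z = Zs \<sigma> K + Zs \<sigma> (K - 1) * \<beta> * (1 - (1 + 2 * \<tau>) * exp (-2 * \<tau>))"
  define P0 where "P0 = Delta0 N \<tau> x0
             + (Zs \<sigma> K - (1 + \<sigma>) * (Zs \<sigma> (K - 1) + 1)) * Delta0 N \<tau> v0
             + exp (C * \<tau>) / C
                 * (1 + exp (2 * \<tau> + C * \<sigma>) / \<beta> + exp (C * \<tau>) * (\<tau> - \<sigma>))
                 * (Zs \<sigma> K + Zs \<sigma> (K - 1) * \<beta> * (1 - (1 + 2 * \<tau>) * exp (-2 * \<tau>)))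
                 * Delta0 N \<tau> v0"
  have P0eq: "P0 = Dx + W * Dv + e1 / C * Q * Z * Dv"
    unfolding P0_def Dx_def Dv_def W_def e1_def Q_def Z_def by simp
  have e2: "exp (- 2 * \<tau>) < 1" using tau by simp
  have e2b: "(1 + 2 * \<tau>) * exp (- 2 * \<tau>) \<le> 1"
  proof -
    have "1 + 2 * \<tau> \<le> exp (2 * \<tau>)" by (rule exp_ge_add_one_self)
    then have "(1 + 2 * \<tau>) * exp (- 2 * \<tau>) \<le> exp (2 * \<tau>) * exp (- 2 * \<tau>)"
      by (simp add: mult_right_mono)
    also have "\<dots> = 1" by (simp add: exp_add[symmetric])
    finally show ?thesis .
  qed
  have Z3: "Z \<ge> 3"
  proof -
    have "0 \<le> Zs \<sigma> (K - 1) * \<beta> * (1 - (1 + 2 * \<tau>) * exp (-2 * \<tau>))"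
      using ZK1 beta e2b by simp
    then show ?thesis unfolding Z_def using ZK by linarith
  qed
  have Q0: "Q \<ge> 1" unfolding Q_def using beta sig by simp
  have P0_nonneg: "0 \<le> P0"
    unfolding P0eq using Dx0 Dv0 W0 Q0 Z3 Cpos e1ge by simp
  have Ccond': "e1 * (4 * \<tau> * e1 + \<beta> * (1 - exp (-2 * \<tau>))) + C \<le> \<psi> P0"
    using Ccond unfolding P0_def e1_def .
  have psiP0: "\<psi> P0 \<le> 1" by (rule psi_le1[OF P0_nonneg])
  have bt: "0 < \<beta> * (1 - exp (-2 * \<tau>))" using beta e2 by simp
  have bt': "0 < e1 * (\<beta> * (1 - exp (-2 * \<tau>)))" using bt e1ge by simp
  have t4: "4 * \<tau> \<le> 4 * \<tau> * e1 * e1"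
  proof -
    have "1 \<le> e1 * e1" using e1ge by (metis mult_mono' le_numeral_extra(4) zero_le_one mult_1)
    then show ?thesis using tau by (simp add: mult.assoc)
  qed
  have Lexp: "e1 * (4 * \<tau> * e1 + \<beta> * (1 - exp (-2 * \<tau>))) + C
       = C + 4 * \<tau> * e1 * e1 + e1 * (\<beta> * (1 - exp (-2 * \<tau>)))" by (simp add: algebra_simps)
  have tau4: "\<tau> < 1/4" and C1: "C < 1"
    using Ccond' psiP0 Lexp t4 bt' Cpos tau by linarith+
  have Ct: "C * \<tau> \<le> 1/4"
  proof -
    have "C * \<tau> \<le> 1 * \<tau>" using C1 tau by (intro mult_right_mono) auto
    then show ?thesis using tau4 by simp
  qed
  have e1le: "e1 \<le> 4/3"
  proof -
    have h1: "e1 \<le> 1 + C * \<tau> + (C * \<tau>)^2" unfolding e1_def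
      by (rule exp_bound) (use Cpos tau Ct in auto)
    have "(C * \<tau>)^2 \<le> (1/4)^2"
      by (rule power_mono[OF Ct]) (use Cpos tau in simp)
    then have h2: "(C * \<tau>)^2 \<le> 1/16" by (simp add: power2_eq_square)
    show ?thesis using h1 h2 Ct by linarith
  qed
  define d where "d = \<tau> - \<sigma>"
  have d0: "0 \<le> d" "d < 1/4" using sig tau4 unfolding d_def by auto
  have de1: "d * e1 \<le> 1/3"
  proof -
    have "d * e1 \<le> (1/4) * (4/3)" using d0 e1le e1ge by (intro mult_mono) auto
    then show ?thesis by simp
  qed
  have ecd: "exp (C * d) \<le> 4/3"
  proof -
    have "exp (C * d) \<le> e1" unfolding e1_def d_def using Cpos sig by simp
    then show ?thesis using e1le by simp
  qed
  define G where "G = e1 / (1 - d * e1)"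
  have G0: "G > 0" unfolding G_def using de1 e1ge by simp
  define \<kappa> where "\<kappa> = 2 * (\<tau> + \<sigma>) * G * exp (C * \<tau>)"
  have kap: "\<kappa> \<le> 4 * \<tau> * e1 * e1"
  proof -
    have "2 * \<tau> * e1 \<le> 1"
    proof -
      have "2 * \<tau> * e1 \<le> 2 * (1/4) * (4/3)" using tau tau4 e1le e1ge
        by (intro mult_mono) auto
      then show ?thesis by simp
    qed
    then have "d * (2 * \<tau> * e1) \<le> d * 1" using d0 by (intro mult_left_mono) auto
    then have "2 * (\<tau> + \<sigma>) \<le> 4 * \<tau> * (1 - d * e1)" unfolding d_def by (simp add: algebra_simps)
    then have "2 * (\<tau> + \<sigma>) / (1 - d * e1) \<le> 4 * \<tau>" using de1 by (simp add: pos_divide_le_eq)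
    then have "2 * (\<tau> + \<sigma>) / (1 - d * e1) * (e1 * e1) \<le> 4 * \<tau> * (e1 * e1)"
      using e1ge by (intro mult_right_mono) auto
    moreover have "\<kappa> = 2 * (\<tau> + \<sigma>) / (1 - d * e1) * (e1 * e1)"
      unfolding \<kappa>_def G_def e1_def[symmetric] by simp
    ultimately show ?thesis by (simp add: mult.assoc)
  qed
  have rate0: "\<psi> P0 > C + \<kappa>" using Ccond' Lexp kap bt' by linarith
  obtain P1 where P1: "P1 > P0" "\<psi> P1 > C + \<kappa>"
  proof -
    have "(\<psi> \<longlongrightarrow> \<psi> P0) (at P0 within {0..})" using psi_cont P0_nonneg by (simp add: continuous_on_def)
    then have "(\<psi> \<longlongrightarrow> \<psi> P0) (at P0 within {P0<..})"
      by (rule tendsto_within_subset) (use P0_nonneg in auto)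
    then have "eventually (\<lambda>y. C + \<kappa> < \<psi> y) (at_right P0)"
      using rate0 by (rule order_tendstoD(1))
    then obtain b where b: "b > P0" "\<And>y. P0 < y \<Longrightarrow> y < b \<Longrightarrow> C + \<kappa> < \<psi> y"
      by (auto simp: eventually_at_right_field)
    show ?thesis by (rule that[of "(P0 + b) / 2"]) (use b in auto)
  qed
  define cT where "cT = 1 + 2 * \<tau> / (1 - d)"
  define Hc where "Hc = (1 + d * G) * exp (C * d)"
  have Hc0: "Hc > 0"
  proof -
    have "0 < 1 + d * G" using d0 G0 by (simp add: add_pos_nonneg)
    then show ?thesis unfolding Hc_def by simp
  qed
  have cT1: "cT \<ge> 1" unfolding cT_def using tau d0 by simp
  have dG: "1 + d * G \<le> 3/2"
  proof -
    have "d * G = (d * e1) / (1 - d * e1)" unfolding G_def by simp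
    also have "\<dots> \<le> 1/2" using de1 by (simp add: divide_le_eq)
    finally show ?thesis by simp
  qed
  have cTb: "cT \<le> 4/3 * (1 + 2 * \<tau>)"
  proof -
    have "2 * \<tau> / (1 - d) \<le> 8/3 * \<tau>" using d0 tau by (simp add: divide_le_eq algebra_simps)
    then show ?thesis unfolding cT_def by simp
  qed
  have HcT: "Hc * cT \<le> 3 * (1 + 2 * \<tau>)"
  proof -
    have "Hc \<le> 3/2 * (4/3)" unfolding Hc_def using dG ecd d0 G0
      by (intro mult_mono) auto
    then have "Hc * cT \<le> (3/2 * (4/3)) * (4/3 * (1 + 2 * \<tau>))"
      using cTb cT1 Hc0 by (intro mult_mono) auto
    then show ?thesis using tau by simp
  qed
  have Qb: "Q \<ge> 1 + 2 * \<tau>"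
  proof -
    have "e1 * (\<beta> * (1 - exp (-2 * \<tau>))) < 1" using Ccond' psiP0 Lexp t4 Cpos tau by linarith
    then have bb: "\<beta> * (1 - exp (-2 * \<tau>)) < 1"
      using e1ge bt by (smt (verit) mult_le_cancel_right1)
    have "\<beta> * (exp (2 * \<tau>) - 1) = exp (2 * \<tau>) * (\<beta> * (1 - exp (-2 * \<tau>)))"
      by (simp add: algebra_simps exp_minus[symmetric] exp_add[symmetric])
    also have "\<dots> < exp (2 * \<tau>) * 1" using bb by simp
    also have "\<dots> \<le> exp (2 * \<tau> + C * \<sigma>)" using Cpos sig by simp
    finally have "exp (2 * \<tau>) - 1 < exp (2 * \<tau> + C * \<sigma>) / \<beta>" using beta
      by (simp add: less_divide_eq mult.commute)
    moreover have "1 + 2 * \<tau> \<le> exp (2 * \<tau>)" by (rule exp_ge_add_one_self)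
    moreover have "0 \<le> exp (C * \<tau>) * (\<tau> - \<sigma>)" using sig by simp
    ultimately show ?thesis unfolding Q_def by linarith
  qed
  have QZ: "Hc * cT \<le> Q * Z"
  proof -
    have "(1 + 2 * \<tau>) * 3 \<le> Q * Z" using Qb Z3 tau by (intro mult_mono) auto
    then show ?thesis using HcT by simp
  qed
  have budget: "Hc * e1 * cT * Dv / C \<le> P0 - Dx"
  proof -
    have "Hc * e1 * cT * Dv / C = e1 / C * (Hc * cT) * Dv" by simp
    also have "\<dots> \<le> e1 / C * (Q * Z) * Dv"
      using QZ Dv0 e1ge Cpos by (intro mult_right_mono mult_left_mono) auto
    also have "\<dots> \<le> W * Dv + e1 / C * Q * Z * Dv"
    proof -
      have "0 \<le> W * Dv" using W0 Dv0 by simp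
      moreover have "e1 / C * (Q * Z) * Dv = e1 / C * Q * Z * Dv" by (simp only: mult.assoc)
      ultimately show ?thesis by linarith
    qed
    finally show ?thesis unfolding P0eq by simp
  qed
  define \<eta> where "\<eta> = (P1 - P0) * C / Hc"
  have eta0: "\<eta> > 0" unfolding \<eta>_def using P1 Cpos Hc0 by simp
  define B where "B = e1 * cT * Dv + \<eta>"
  have DvB': "Dv < B"
  proof -
    have "1 * 1 \<le> e1 * cT" using e1ge cT1 by (intro mult_mono) auto
    then have "1 * Dv \<le> e1 * cT * Dv" using Dv0 by (intro mult_right_mono) auto
    then have "Dv \<le> e1 * cT * Dv" by simp
    then show ?thesis unfolding B_def using eta0 by simp
  qed
  have Bpos: "B > 0" using DvB' Dv0 by simp
  have transB: "Dv * (1 + 2 * \<tau> / (1 - d)) < B * exp (- C * \<tau>)"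
  proof -
    have ee: "e1 * exp (- C * \<tau>) = 1" unfolding e1_def by (simp add: exp_add[symmetric])
    have "B * exp (- C * \<tau>) = cT * Dv * (e1 * exp (- C * \<tau>)) + \<eta> * exp (- C * \<tau>)"
      unfolding B_def by (simp add: algebra_simps)
    also have "\<dots> = cT * Dv + \<eta> * exp (- C * \<tau>)" using ee by simp
    finally show ?thesis using eta0 unfolding cT_def by simp
  qed
  have posb: "Dx + (1 + d * G) * exp (C * d) * B / C \<le> P1"
  proof -
    have "(1 + d * G) * exp (C * d) * B / C = Hc * e1 * cT * Dv / C + Hc * \<eta> / C"
      unfolding Hc_def B_def by (simp add: algebra_simps add_divide_distrib)
    also have "Hc * \<eta> / C = P1 - P0" unfolding \<eta>_def using Hc0 Cpos by simp
    finally show ?thesis using budget by linarith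
  qed
  interpret fl: flock N \<sigma> \<tau> \<psi> x v Dx Dv C B P1 d G
  proof
    show "2 \<le> N" by (rule N)
    show "0 < \<sigma>" "\<sigma> \<le> \<tau>" by (rule sig(1), rule sig(2))
    show "continuous_on {0..} \<psi>" by (rule psi_cont)
    show "\<And>s t. 0 \<le> s \<Longrightarrow> s \<le> t \<Longrightarrow> \<psi> t \<le> \<psi> s" by (rule psi_mono)
    show "\<And>s. 0 \<le> s \<Longrightarrow> 0 < \<psi> s" by (rule psi_pos)
    show "\<And>s. 0 \<le> s \<Longrightarrow> \<psi> s \<le> 1" by (rule psi_le1)
    show "\<And>i t. i < N \<Longrightarrow> - \<tau> \<le> t \<Longrightarrow> (x i has_vector_derivative v i t) (at t within {- \<tau>..})"
      by (rule x_deriv)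
    show "\<And>i. i < N \<Longrightarrow> continuous_on {- \<tau>..} (v i)" by (rule v_cont)
    show "\<And>i t. i < N \<Longrightarrow> 0 < t \<Longrightarrow>
      (v i has_vector_derivative (\<Sum>j\<in>{..<N} - {i}. (\<psi> (norm (x i (t - \<sigma>) - x j (t - \<tau>))) / real (N - 1))
         *\<^sub>R (v j (t - \<tau>) - v i (t - \<sigma>)))) (at t)" by (rule v_deriv)
    show "\<And>i j s t. i < N \<Longrightarrow> j < N \<Longrightarrow> s \<in> {- \<tau>..0} \<Longrightarrow> t \<in> {- \<tau>..0} \<Longrightarrow> norm (x i s - x j t) \<le> Dx"
      by (rule DxB)
    show "\<And>i j s t. i < N \<Longrightarrow> j < N \<Longrightarrow> s \<in> {- \<tau>..0} \<Longrightarrow> t \<in> {- \<tau>..0} \<Longrightarrow> norm (v i s - v j t) \<le> Dv"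
      by (rule DvB)
    show "0 < C" by (rule Cpos)
    show "d = \<tau> - \<sigma>" by (rule d_def)
    show "d * exp (C * \<tau>) < 1" using de1 unfolding e1_def by simp
    show "d < 1" using d0 by simp
    show "G = exp (C * \<tau>) / (1 - d * exp (C * \<tau>))" unfolding G_def e1_def ..
    show "0 < B" by (rule Bpos)
    show "Dv < B" by (rule DvB')
    show "Dv * (1 + 2 * \<tau> / (1 - d)) < B * exp (- C * \<tau>)" by (rule transB)
    show "Dx + (1 + d * G) * exp (C * d) * B / C \<le> P1" by (rule posb)
    show "C + 2 * (\<tau> + \<sigma>) * G * exp (C * \<tau>) < \<psi> P1" using P1(2) unfolding \<kappa>_def .
  qed
  have N0: "0 < N" using N by simp
  have dv_le: "dX N v t \<le> B * exp (- C * t)" if "0 \<le> t" for t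
    unfolding dX_def
    by (rule Max_pairs_le[OF N0, where g = "\<lambda>i j. norm (v i t - v j t)"])
       (use fl.decay[OF that] in \<open>auto intro: less_imp_le\<close>)
  have dv_ge: "0 \<le> dX N v t" for t
  proof -
    have "norm (v 0 t - v 0 t) \<le> Max {norm (v i t - v j t) | i j. i < N \<and> j < N}"
      by (rule Max_pairs_ge[OF N0 N0, where g = "\<lambda>i j. norm (v i t - v j t)"])
    then show ?thesis unfolding dX_def by simp
  qed
  have dx_le: "dX N x t \<le> P1" if "0 \<le> t" for t
    unfolding dX_def
    by (rule Max_pairs_le[OF N0, where g = "\<lambda>i j. norm (x i t - x j t)"])
       (use fl.xbound[OF that] in auto)
  have part1: "bdd_above (dX N x ` {0..})"
    by (rule bdd_aboveI2[where M = P1]) (use dx_le in auto)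
  have part2: "((\<lambda>t. dX N v t) \<longlongrightarrow> 0) at_top"
  proof (rule tendsto_sandwich[OF _ _ tendsto_const exp_decay_lim[OF Cpos, of B]])
    show "eventually (\<lambda>t. 0 \<le> dX N v t) at_top" using dv_ge by simp
    show "eventually (\<lambda>t. dX N v t \<le> B * exp (- C * t)) at_top"
      using dv_le by (auto simp: eventually_at_top_linorder)
  qed
  have part3: "\<exists>A>0. \<forall>t\<ge>0. dX N v t \<le> A * exp (- C * t)"
    using Bpos dv_le by blast
  show ?thesis using part1 part2 part3 by blast
qed

end
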